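(* Let $c \geq 1$ and let $\phi : (0,1) \rightarrow \mathbb{R}^+$ be a measurable function such that $$\frac{1}{|I|}\int_I \phi(x)\,dx \leq c \cdot \operatorname{ess\,inf}_{I}(\phi)$$ for every subinterval $I$ of $(0,1)$. Then the decreasing rearrangement $\phi^*$ of $\phi$ satisfies the same condition with the same constant $c$, i.e. $$\frac{1}{|I|}\int_I \phi^*(x)\,dx \leq c \cdot \operatorname{ess\,inf}_{I}(\phi^* )$$ for every subinterval $I$ of $(0,1)$.
   Context: $|\cdot|$ denotes Lebesgue measure on $\mathbb{R}$. The decreasing rearrangement of $\phi$ is defined for $t \in (0,1]$ by $$\phi^*(t) = \sup_{\substack{e \subset (0,1)\\ |e| \geq t}} \Big[\inf_{x \in e} \phi(x)\Big],$$ the supremum being over measurable sets $e$; $\phi^*$ is non-increasing, left continuous and equimeasurable with $\phi$. *)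

theory Defs
  imports "HOL-Analysis.Analysis"
begin

definition ess_inf_on :: "(real \<Rightarrow> real) \<Rightarrow> real set \<Rightarrow> ennreal" where
  "ess_inf_on f I = Sup {a :: ennreal. AE x in lebesgue. x \<in> I \<longrightarrow> a \<le> ennreal (f x)}"

definition decr_rearr :: "(real \<Rightarrow> real) \<Rightarrow> real \<Rightarrow> real" where
  "decr_rearr \<phi> t = Sup {Inf (\<phi> ` e) | e. e \<in> sets lebesgue \<and> e \<subseteq> {0<..<1}
                                      \<and> measure lebesgue e \<ge> t}"

definition A1_cond :: "real \<Rightarrow> (real \<Rightarrow> real) \<Rightarrow> bool" where
  "A1_cond c f \<longleftrightarrow> (\<forall>I. is_interval I \<and> I \<subseteq> {0<..<1} \<and> measure lebesgue I > 0 \<longrightarrow>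
      set_nn_integral lebesgue I (\<lambda>x. ennreal (f x)) / ennreal (measure lebesgue I)
        \<le> ennreal c * ess_inf_on f I)"

end

theory Submission
  imports Defs
begin

lemma sigma_finite_lebesgue: "sigma_finite_measure (lebesgue :: real measure)"
  unfolding sigma_finite_measure_def
proof (intro exI[of _ "range (\<lambda>n::nat. {-real n..real n})"] conjI)
  show "\<Union> (range (\<lambda>n::nat. {-real n..real n})) = space lebesgue"
  proof (auto)
    fix x :: real
    obtain n :: nat where "\<bar>x\<bar> \<le> real n" using real_arch_simple by blast
    then show "\<exists>n. - real n \<le> x \<and> x \<le> real n" by (intro exI[of _ n]) auto
  qed
  show "countable (range (\<lambda>n::nat. {-real n..real n}))" by simp
  show "range (\<lambda>n::nat. {-real n..real n}) \<subseteq> sets lebesgue" by auto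
  show "\<forall>a\<in>range (\<lambda>n::nat. {-real n..real n}). emeasure lebesgue a \<noteq> \<infinity>"
    using lmeasurable_interval(1) by (auto simp: fmeasurable_def)
qed
lemma lc_meas:
  fixes f :: "real \<Rightarrow> real"
  assumes f: "f \<in> borel_measurable lebesgue"
  shows "(\<lambda>p. indicator {p. 0 \<le> snd p \<and> snd p < f (fst p)} p :: ennreal) \<in> borel_measurable (lebesgue \<Otimes>\<^sub>M (lborel::real measure))"
proof -
  have f1: "(\<lambda>p. f (fst p)) \<in> borel_measurable (lebesgue \<Otimes>\<^sub>M (lborel::real measure))"
    by (rule measurable_compose[OF measurable_fst f])
  have s1: "(\<lambda>p::real\<times>real. snd p) \<in> borel_measurable (lebesgue \<Otimes>\<^sub>M (lborel::real measure))"
    by (rule measurable_compose[OF measurable_snd]) simp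
  have "{p \<in> space (lebesgue \<Otimes>\<^sub>M (lborel::real measure)). snd p < f (fst p)} \<in> sets (lebesgue \<Otimes>\<^sub>M (lborel::real measure))"
    using s1 f1 by (rule borel_measurable_less)
  moreover have "{p \<in> space (lebesgue \<Otimes>\<^sub>M (lborel::real measure)). 0 \<le> snd p} \<in> sets (lebesgue \<Otimes>\<^sub>M (lborel::real measure))"
    by measurable
  ultimately have "{p \<in> space (lebesgue \<Otimes>\<^sub>M (lborel::real measure)). snd p < f (fst p)} \<inter> {p \<in> space (lebesgue \<Otimes>\<^sub>M (lborel::real measure)). 0 \<le> snd p} \<in> sets (lebesgue \<Otimes>\<^sub>M (lborel::real measure))"
    by blast
  moreover have "{p \<in> space (lebesgue \<Otimes>\<^sub>M (lborel::real measure)). snd p < f (fst p)} \<inter> {p \<in> space (lebesgue \<Otimes>\<^sub>M (lborel::real measure)). 0 \<le> snd p} = {p. 0 \<le> snd p \<and> snd p < f (fst p)}"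
    by (auto simp: space_pair_measure)
  ultimately show ?thesis by (metis borel_measurable_indicator)
qed

lemma layer_cake:
  fixes f :: "real \<Rightarrow> real"
  assumes f[measurable]: "f \<in> borel_measurable lebesgue" and nn: "\<And>x. 0 \<le> f x"
  shows "(\<integral>\<^sup>+x. ennreal (f x) \<partial>lebesgue) = (\<integral>\<^sup>+y. emeasure lebesgue {x. 0 \<le> y \<and> y < f x} \<partial>lborel)"
proof -
  interpret L: sigma_finite_measure "lebesgue :: real measure" by (rule sigma_finite_lebesgue)
  interpret P: pair_sigma_finite "lebesgue :: real measure" "lborel :: real measure" ..
  define g where "g = (\<lambda>x y. indicator {p. 0 \<le> snd p \<and> snd p < f (fst p)} (x,y) :: ennreal)"
  have gm: "case_prod g \<in> borel_measurable (lebesgue \<Otimes>\<^sub>M lborel)"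
  proof -
    have "case_prod g = (\<lambda>p. indicator {p. 0 \<le> snd p \<and> snd p < f (fst p)} p :: ennreal)"
      by (auto simp: g_def fun_eq_iff)
    then show ?thesis using lc_meas[OF f] by metis
  qed
  have 1: "ennreal (f x) = (\<integral>\<^sup>+y. g x y \<partial>lborel)" for x
  proof -
    have "(\<lambda>y. g x y) = indicator {0..<f x}"
      by (auto simp: g_def indicator_def fun_eq_iff)
    moreover have "(\<integral>\<^sup>+y. indicator {0..<f x} y \<partial>lborel) = ennreal (f x)"
      using nn[of x] by (subst nn_integral_indicator) (auto simp: emeasure_lborel_Ico)
    ultimately show ?thesis by metis
  qed
  have 2: "(\<integral>\<^sup>+x. g x y \<partial>lebesgue) = emeasure lebesgue {x. 0 \<le> y \<and> y < f x}" for y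
  proof -
    have "(\<lambda>x. g x y) = indicator {x. 0 \<le> y \<and> y < f x}"
      by (auto simp: g_def indicator_def fun_eq_iff)
    moreover have "{x. 0 \<le> y \<and> y < f x} \<in> sets lebesgue"
    proof (cases "0 \<le> y")
      case True
      have a: "{x \<in> space lebesgue. y < f x} \<in> sets lebesgue" using f borel_measurable_iff_greater by blast
      have b: "{x. 0 \<le> y \<and> y < f x} = {x \<in> space lebesgue. y < f x}" using True by auto
      show ?thesis using a b by metis
    qed simp
    ultimately show ?thesis by (metis nn_integral_indicator)
  qed
  have "(\<integral>\<^sup>+x. ennreal (f x) \<partial>lebesgue) = (\<integral>\<^sup>+x. (\<integral>\<^sup>+y. g x y \<partial>lborel) \<partial>lebesgue)"
    by (intro nn_integral_cong 1)
  also have "\<dots> = (\<integral>\<^sup>+y. (\<integral>\<^sup>+x. g x y \<partial>lebesgue) \<partial>lborel)"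
    by (rule P.Fubini'[OF gm, symmetric])
  also have "\<dots> = (\<integral>\<^sup>+y. emeasure lebesgue {x. 0 \<le> y \<and> y < f x} \<partial>lborel)"
    by (intro nn_integral_cong 2)
  finally show ?thesis .
qed



locale A1s =
  fixes c :: real and \<phi> :: "real \<Rightarrow> real"
  assumes c1: "c \<ge> 1"
    and meas: "set_borel_measurable lebesgue {0<..<1} \<phi>"
    and pos: "\<forall>x\<in>{0<..<1}. \<phi> x > 0"
    and A1: "A1_cond c \<phi>"
begin

definition \<psi> :: "real \<Rightarrow> real" where "\<psi> x = indicator {0<..<1::real} x * \<phi> x"

lemma psi_meas: "\<psi> \<in> borel_measurable lebesgue"
  using meas unfolding set_borel_measurable_def \<psi>_def by simp

lemma psi_nn: "0 \<le> \<psi> x"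
  using pos by (auto simp: \<psi>_def indicator_def less_imp_le)

lemma sets_gt: "{x\<in>{0<..<1}. y < \<phi> x} \<in> sets lebesgue"
proof -
  have "{x \<in> space lebesgue. y < \<psi> x} \<in> sets lebesgue"
    using psi_meas borel_measurable_iff_greater by blast
  then have "{0<..<1} \<inter> {x \<in> space lebesgue. y < \<psi> x} \<in> sets lebesgue" by auto
  moreover have "{0<..<1} \<inter> {x \<in> space lebesgue. y < \<psi> x} = {x\<in>{0<..<1}. y < \<phi> x}"
    by (auto simp: \<psi>_def)
  ultimately show ?thesis by simp
qed

lemma sets_ge: "{x\<in>{0<..<1}. y \<le> \<phi> x} \<in> sets lebesgue"
proof -
  have "{x \<in> space lebesgue. y \<le> \<psi> x} \<in> sets lebesgue"
    using psi_meas borel_measurable_iff_ge by blast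
  then have "{0<..<1} \<inter> {x \<in> space lebesgue. y \<le> \<psi> x} \<in> sets lebesgue" by auto
  moreover have "{0<..<1} \<inter> {x \<in> space lebesgue. y \<le> \<psi> x} = {x\<in>{0<..<1}. y \<le> \<phi> x}"
    by (auto simp: \<psi>_def)
  ultimately show ?thesis by simp
qed

lemma sets_le: "{x\<in>{0<..<1}. \<phi> x \<le> y} \<in> sets lebesgue"
proof -
  have "{x\<in>{0<..<1}. \<phi> x \<le> y} = {0<..<1} - {x\<in>{0<..<1}. y < \<phi> x}" by auto
  then show ?thesis using sets_gt by auto
qed

definition \<mu> :: "real \<Rightarrow> real" where "\<mu> y = measure lebesgue {x\<in>{0<..<1}. y < \<phi> x}"

lemma emeasure_sub_Omega:
  assumes "S \<in> sets lebesgue" "S \<subseteq> {0<..<1::real}"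
  shows "emeasure lebesgue S = ennreal (measure lebesgue S)" "measure lebesgue S \<le> 1"
proof -
  have "emeasure lebesgue S \<le> emeasure lebesgue {0<..<1::real}"
    using assms by (intro emeasure_mono) auto
  then have le: "emeasure lebesgue S \<le> 1" by simp
  then show "emeasure lebesgue S = ennreal (measure lebesgue S)"
    by (intro emeasure_eq_ennreal_measure) (auto simp: top_unique)
  then show "measure lebesgue S \<le> 1" using le
    by (metis ennreal_le_1)
qed

lemma sub_gt: "{x\<in>{0<..<1}. y < \<phi> x} \<subseteq> {0<..<1::real}" by auto

lemma mu_emeasure: "emeasure lebesgue {x\<in>{0<..<1}. y < \<phi> x} = ennreal (\<mu> y)"
  using emeasure_sub_Omega(1)[OF sets_gt sub_gt] by (simp add: \<mu>_def)

lemma mu_fin: "emeasure lebesgue {x\<in>{0<..<1}. y < \<phi> x} \<noteq> \<infinity>"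
  using mu_emeasure by simp

lemma mu_le1: "\<mu> y \<le> 1"
  using emeasure_sub_Omega(2)[OF sets_gt sub_gt] by (simp add: \<mu>_def)

lemma mu_nn: "0 \<le> \<mu> y" by (simp add: \<mu>_def)

lemma mu_antimono: "y \<le> z \<Longrightarrow> \<mu> z \<le> \<mu> y"
  unfolding \<mu>_def
  by (rule measure_mono_fmeasurable) (use mu_fin sets_gt in \<open>auto simp: fmeasurable_def top.not_eq_extremum\<close>)

lemma mu_small: assumes "t > 0" shows "\<exists>Y. \<mu> Y < t"
proof -
  let ?A = "\<lambda>n::nat. {x\<in>{0<..<1}. real n < \<phi> x}"
  have "(\<lambda>n. measure lebesgue (?A n)) \<longlonglongrightarrow> measure lebesgue (\<Inter> (range ?A))"
  proof (rule Lim_measure_decseq)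
    show "antimono_on UNIV ?A"
      by (auto simp: monotone_on_def)
  qed (use sets_gt mu_fin in auto)
  moreover have "\<Inter> (range ?A) = {}"
  proof (safe)
    fix x assume "x \<in> \<Inter> (range ?A)"
    moreover obtain n :: nat where "\<phi> x < real n" using reals_Archimedean2 by blast
    ultimately have "real n < \<phi> x" "\<phi> x < real n" by auto
    then show "x \<in> {}" by simp
  qed
  ultimately have "(\<lambda>n. measure lebesgue (?A n)) \<longlonglongrightarrow> 0" by simp
  then have "eventually (\<lambda>n. measure lebesgue (?A n) < t) sequentially"
    using assms by (rule order_tendstoD)
  then obtain n where "measure lebesgue (?A n) < t"
    by (meson eventually_sequentially order_refl)
  then show ?thesis unfolding \<mu>_def by blast
qed


abbreviation "ds \<equiv> decr_rearr \<phi>"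

definition SS :: "real \<Rightarrow> real set" where
  "SS t = {Inf (\<phi> ` e) | e. e \<in> sets lebesgue \<and> e \<subseteq> {0<..<1} \<and> measure lebesgue e \<ge> t}"

lemma ds_SS: "ds t = Sup (SS t)"
  by (simp add: decr_rearr_def SS_def)

lemma bdd_below_phi: "e \<subseteq> {0<..<1} \<Longrightarrow> bdd_below (\<phi> ` e)"
  using pos by (intro bdd_belowI[of _ 0]) (auto intro: less_imp_le)

lemma inf_nn: "e \<subseteq> {0<..<1} \<Longrightarrow> e \<noteq> {} \<Longrightarrow> 0 \<le> Inf (\<phi> ` e)"
  using pos by (intro cInf_greatest) (auto intro: less_imp_le)

lemma inf_le: "e \<subseteq> {0<..<1} \<Longrightarrow> x \<in> e \<Longrightarrow> Inf (\<phi> ` e) \<le> \<phi> x"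
  by (rule cInf_lower) (auto intro: bdd_below_phi)

lemma nonempty_meas: "measure lebesgue e \<ge> t \<Longrightarrow> t > 0 \<Longrightarrow> e \<noteq> {}"
  by auto

lemma Omega_SS: "t \<le> 1 \<Longrightarrow> Inf (\<phi> ` {0<..<1}) \<in> SS t"
  unfolding SS_def by (intro CollectI exI[of _ "{0<..<1}"]) auto

lemma SS_ne: "t \<le> 1 \<Longrightarrow> SS t \<noteq> {}"
  using Omega_SS by blast

lemma SS_bdd: assumes "t > 0" shows "bdd_above (SS t)"
proof -
  obtain Y where Y: "\<mu> Y < t" using mu_small assms by blast
  show ?thesis
  proof (rule bdd_aboveI[of _ Y])
    fix v assume "v \<in> SS t"
    then obtain e where e: "e \<in> sets lebesgue" "e \<subseteq> {0<..<1}" "measure lebesgue e \<ge> t" "v = Inf (\<phi> ` e)"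
      unfolding SS_def by blast
    show "v \<le> Y"
    proof (rule ccontr)
      assume "\<not> v \<le> Y"
      then have "e \<subseteq> {x\<in>{0<..<1}. Y < \<phi> x}" using e inf_le[OF e(2)] by fastforce
      then have "measure lebesgue e \<le> \<mu> Y" unfolding \<mu>_def
        by (rule measure_mono_fmeasurable) (use e(1) mu_fin sets_gt in \<open>auto simp: fmeasurable_def top.not_eq_extremum\<close>)
      then show False using Y e(3) by linarith
    qed
  qed
qed

lemma SS_nn: "v \<in> SS t \<Longrightarrow> t > 0 \<Longrightarrow> 0 \<le> v"
  unfolding SS_def using inf_nn nonempty_meas by blast

lemma ds_nn: assumes "0 < t" "t \<le> 1" shows "0 \<le> ds t"
proof -
  obtain v where "v \<in> SS t" using SS_ne assms by blast
  then have "0 \<le> v" "v \<le> Sup (SS t)" using SS_nn assms SS_bdd by (auto intro: cSup_upper)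
  then show ?thesis by (simp add: ds_SS)
qed

lemma ds_P2: assumes "0 < t" "t \<le> 1" "y < ds t" shows "t \<le> \<mu> y"
proof -
  obtain v where "v \<in> SS t" "y < v"
    using assms SS_ne SS_bdd less_cSup_iff[of "SS t" y] by (auto simp: ds_SS)
  then obtain e where e: "e \<in> sets lebesgue" "e \<subseteq> {0<..<1}" "measure lebesgue e \<ge> t" "y < Inf (\<phi> ` e)"
    unfolding SS_def by blast
  then have "e \<subseteq> {x\<in>{0<..<1}. y < \<phi> x}" using inf_le[OF e(2)] by fastforce
  then have "measure lebesgue e \<le> \<mu> y" unfolding \<mu>_def
    by (rule measure_mono_fmeasurable) (use e(1) mu_fin sets_gt in \<open>auto simp: fmeasurable_def top.not_eq_extremum\<close>)
  then show ?thesis using e(3) by linarith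
qed

lemma ds_P3: assumes "0 < t" "t \<le> 1" "t < \<mu> y" shows "y < ds t"
proof -
  let ?A = "\<lambda>n::nat. {x\<in>{0<..<1}. y + 1 / real (Suc n) \<le> \<phi> x}"
  have "(\<lambda>n. measure lebesgue (?A n)) \<longlonglongrightarrow> measure lebesgue (\<Union> (range ?A))"
  proof (rule Lim_measure_incseq)
    show "incseq ?A"
    proof (rule incseq_SucI, safe)
      fix n x assume "y + 1 / real (Suc n) \<le> \<phi> x"
      moreover have "1 / real (Suc (Suc n)) \<le> 1 / real (Suc n)"
        by (intro divide_left_mono) auto
      ultimately show "y + 1 / real (Suc (Suc n)) \<le> \<phi> x" by linarith
    qed
    have "\<Union> (range ?A) \<subseteq> {0<..<1}" by auto
    then have "emeasure lebesgue (\<Union> (range ?A)) \<le> emeasure lebesgue {0<..<1::real}"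
      by (intro emeasure_mono) auto
    then show "emeasure lebesgue (\<Union> (range ?A)) \<noteq> \<infinity>"
      by (auto simp: top_unique)
  qed (use sets_ge in auto)
  moreover have "\<Union> (range ?A) = {x\<in>{0<..<1}. y < \<phi> x}"
  proof
    show "\<Union> (range ?A) \<subseteq> {x\<in>{0<..<1}. y < \<phi> x}"
    proof (safe)
      fix x n assume "y + 1 / real (Suc n) \<le> \<phi> x"
      moreover have "0 < 1 / real (Suc n)" by simp
      ultimately show "y < \<phi> x" by linarith
    qed
    show "{x\<in>{0<..<1}. y < \<phi> x} \<subseteq> \<Union> (range ?A)"
    proof
      fix x assume "x \<in> {x\<in>{0<..<1}. y < \<phi> x}"
      then have x: "0 < x" "x < 1" "y < \<phi> x" by auto
      obtain n where "1 / real (Suc n) < \<phi> x - y"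
        using x(3) by (metis diff_gt_0_iff_gt nat_approx_posE)
      then have "x \<in> ?A n" using x by auto
      then show "x \<in> \<Union> (range ?A)" by blast
    qed
  qed
  ultimately have "(\<lambda>n. measure lebesgue (?A n)) \<longlonglongrightarrow> \<mu> y" unfolding \<mu>_def by metis
  then have "eventually (\<lambda>n. t < measure lebesgue (?A n)) sequentially"
    using assms(3) by (rule order_tendstoD)
  then obtain n where n: "t < measure lebesgue (?A n)"
    by (meson eventually_sequentially order_refl)
  have ne: "?A n \<noteq> {}"
  proof
    assume e: "?A n = {}"
    have "measure lebesgue (?A n) = 0" unfolding e by simp
    then show False using n assms(1) by linarith
  qed
  have i1: "y + 1 / real (Suc n) \<le> Inf (\<phi> ` ?A n)"
  proof (rule cInf_greatest)
    show "\<phi> ` ?A n \<noteq> {}" using ne by blast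
    fix z assume "z \<in> \<phi> ` ?A n"
    then show "y + 1 / real (Suc n) \<le> z" by blast
  qed
  have s1: "?A n \<in> sets lebesgue" by (rule sets_ge)
  have s2: "?A n \<subseteq> {0<..<1}" by blast
  have s3: "t \<le> measure lebesgue (?A n)" using n by linarith
  have "Inf (\<phi> ` ?A n) \<in> SS t"
    unfolding SS_def using s1 s2 s3 by (intro CollectI exI[of _ "?A n"] conjI refl)
  then have i2: "Inf (\<phi> ` ?A n) \<le> ds t"
    unfolding ds_SS using SS_bdd[OF assms(1)] by (rule cSup_upper)
  have "0 < 1 / real (Suc n)" by simp
  then show ?thesis using i1 i2 by linarith
qed

lemma ds_mono: assumes "0 < s" "s \<le> t" "t \<le> 1" shows "ds t \<le> ds s"
  unfolding ds_SS
proof (rule cSup_subset_mono)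
  show "SS t \<noteq> {}" using SS_ne assms by auto
  show "bdd_above (SS s)" using SS_bdd assms by auto
  show "SS t \<subseteq> SS s" unfolding SS_def using assms by force
qed

lemma essinf_le_ds1: "ess_inf_on \<phi> {0<..<1} \<le> ennreal (ds 1)"
  unfolding ess_inf_on_def
proof (rule Sup_least)
  fix a assume "a \<in> {a. AE x in lebesgue. x \<in> {0<..<1} \<longrightarrow> a \<le> ennreal (\<phi> x)}"
  then have ae: "AE x in lebesgue. x \<in> {0<..<1} \<longrightarrow> a \<le> ennreal (\<phi> x)" by simp
  show "a \<le> ennreal (ds 1)"
  proof (rule ccontr)
    assume "\<not> a \<le> ennreal (ds 1)"
    then have "ennreal (ds 1) < a" by simp
    then obtain b where b: "ennreal (ds 1) < b" "b < a" using dense by blast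
    then have "b \<noteq> \<infinity>" using top.not_eq_extremum by fastforce
    then obtain r where r: "b = ennreal r" "0 \<le> r" by (cases b) auto
    have "ds 1 < r" using b(1) r ds_nn[of 1] by (simp add: ennreal_less_iff)
    define e where "e = {x\<in>{0<..<1}. r \<le> \<phi> x}"
    have es: "e \<in> sets lebesgue" unfolding e_def by (rule sets_ge)
    have eO: "e \<subseteq> {0<..<1}" unfolding e_def by auto
    obtain N where N: "{x \<in> space lebesgue. \<not> (x \<in> {0<..<1} \<longrightarrow> a \<le> ennreal (\<phi> x))} \<subseteq> N"
      "emeasure lebesgue N = 0" "N \<in> sets lebesgue"
      using ae by (rule AE_E)
    have sub: "{0<..<1} \<subseteq> e \<union> N"
    proof
      fix x assume x: "x \<in> {0<..<1::real}"
      show "x \<in> e \<union> N"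
      proof (cases "a \<le> ennreal (\<phi> x)")
        case True
        then have "ennreal r \<le> ennreal (\<phi> x)" using b r by simp
        moreover have "0 < \<phi> x" using pos x by auto
        ultimately have "r \<le> \<phi> x" by (simp add: ennreal_le_iff2)
        then show ?thesis using x by (simp add: e_def)
      next
        case False then show ?thesis using N(1) x by auto
      qed
    qed
    have "1 = emeasure lebesgue {0<..<1::real}" by simp
    also have "\<dots> \<le> emeasure lebesgue (e \<union> N)" using sub es N(3) by (intro emeasure_mono) auto
    also have "\<dots> \<le> emeasure lebesgue e + emeasure lebesgue N" using es N(3) by (intro emeasure_subadditive) auto
    also have "\<dots> = ennreal (measure lebesgue e)" using N(2) emeasure_sub_Omega(1)[OF es eO] by simp
    finally have me: "1 \<le> measure lebesgue e" by (simp add: ennreal_le_iff2)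
    then have "e \<noteq> {}" by auto
    then have "r \<le> Inf (\<phi> ` e)" by (intro cInf_greatest) (auto simp: e_def)
    moreover have "Inf (\<phi> ` e) \<in> SS 1"
      unfolding SS_def using me es by (intro CollectI exI[of _ e]) (auto simp: e_def)
    then have "Inf (\<phi> ` e) \<le> ds 1"
      unfolding ds_SS using SS_bdd by (intro cSup_upper) auto
    ultimately show False using \<open>ds 1 < r\<close> by linarith
  qed
qed




definition \<nu> :: "real set \<Rightarrow> ennreal" where
  "\<nu> S = set_nn_integral lebesgue S (\<lambda>x. ennreal (\<phi> x))"

lemma interval_meas: "is_interval (I::real set) \<Longrightarrow> I \<subseteq> {0<..<1} \<Longrightarrow> I \<in> sets lebesgue"
proof -
  assume "is_interval I" "I \<subseteq> {0<..<1}"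
  then have "convex I" "bounded I" using is_interval_convex bounded_subset[OF bounded_Ioo] by blast+
  then have "I \<in> lmeasurable" by (rule measurable_convex)
  then show ?thesis by (rule fmeasurableD)
qed

lemma nu_mono: "S \<subseteq> T \<Longrightarrow> \<nu> S \<le> \<nu> T"
  unfolding \<nu>_def by (intro nn_integral_mono) (auto simp: indicator_def)

lemma ess_le_lambda:
  assumes "I \<in> sets lebesgue" "emeasure lebesgue (I \<inter> {x\<in>{0<..<1}. \<phi> x \<le> L}) > 0"
  shows "ess_inf_on \<phi> I \<le> ennreal L"
  unfolding ess_inf_on_def
proof (rule Sup_least)
  fix a assume "a \<in> {a. AE x in lebesgue. x \<in> I \<longrightarrow> a \<le> ennreal (\<phi> x)}"
  then have ae: "AE x in lebesgue. x \<in> I \<longrightarrow> a \<le> ennreal (\<phi> x)" by simp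
  obtain N where N: "{x \<in> space lebesgue. \<not> (x \<in> I \<longrightarrow> a \<le> ennreal (\<phi> x))} \<subseteq> N"
      "emeasure lebesgue N = 0" "N \<in> sets lebesgue"
    using ae by (rule AE_E)
  show "a \<le> ennreal L"
  proof (rule ccontr)
    assume "\<not> a \<le> ennreal L"
    then have la: "ennreal L < a" by simp
    have "I \<inter> {x\<in>{0<..<1}. \<phi> x \<le> L} \<subseteq> N"
    proof
      fix x assume x: "x \<in> I \<inter> {x\<in>{0<..<1}. \<phi> x \<le> L}"
      then have "ennreal (\<phi> x) \<le> ennreal L" by (simp add: ennreal_leI)
      then have "\<not> a \<le> ennreal (\<phi> x)" using la by (meson leD order.strict_trans2)
      then show "x \<in> N" using N(1) x by auto
    qed
    then have "emeasure lebesgue (I \<inter> {x\<in>{0<..<1}. \<phi> x \<le> L}) \<le> emeasure lebesgue N"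
      using N(3) by (intro emeasure_mono) auto
    then show False using N(2) assms(2) by simp
  qed
qed

lemma A1_app:
  assumes I: "is_interval I" "I \<subseteq> {0<..<1}" and lam: "0 \<le> L"
    and pos: "emeasure lebesgue (I \<inter> {x\<in>{0<..<1}. \<phi> x \<le> L}) > 0"
  shows "\<nu> I \<le> ennreal (c * L) * emeasure lebesgue I"
proof -
  have Is: "I \<in> sets lebesgue" using interval_meas I by blast
  have em: "emeasure lebesgue I = ennreal (measure lebesgue I)"
    using emeasure_sub_Omega(1)[OF Is I(2)] .
  have "emeasure lebesgue (I \<inter> {x\<in>{0<..<1}. \<phi> x \<le> L}) \<le> emeasure lebesgue I"
    using Is by (intro emeasure_mono) auto
  then have mpos: "measure lebesgue I > 0" using pos em by (metis ennreal_less_zero_iff not_le order.strict_trans2 measure_nonneg)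
  have "set_nn_integral lebesgue I (\<lambda>x. ennreal (\<phi> x)) / ennreal (measure lebesgue I)
        \<le> ennreal c * ess_inf_on \<phi> I"
    using A1 I mpos unfolding A1_cond_def by blast
  also have "\<dots> \<le> ennreal c * ennreal L"
    by (intro mult_left_mono ess_le_lambda[OF Is pos]) auto
  also have "\<dots> = ennreal (c * L)" using c1 lam by (simp add: ennreal_mult)
  finally have le: "\<nu> I / ennreal (measure lebesgue I) \<le> ennreal (c * L)" by (simp add: \<nu>_def)
  have "\<nu> I = \<nu> I / ennreal (measure lebesgue I) * ennreal (measure lebesgue I)"
    using mpos by (simp add: ennreal_divide_times)
  also have "\<dots> \<le> ennreal (c * L) * ennreal (measure lebesgue I)"
    by (intro mult_right_mono le) auto
  finally show ?thesis using em by simp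
qed


lemma emeasure_ball_real: "0 \<le> r \<Longrightarrow> emeasure lebesgue (ball (x::real) r) = ennreal (2*r)"
  by (simp add: ball_eq_greaterThanLessThan)

lemma extend:
  assumes C: "is_interval C" "C \<subseteq> {0<..<1}" and lam: "0 \<le> L"
    and p: "p \<in> closure C" "\<And>r. r > 0 \<Longrightarrow> emeasure lebesgue (ball p r \<inter> {x\<in>{0<..<1}. \<phi> x \<le> L}) > 0"
  shows "\<nu> C \<le> ennreal (c * L) * emeasure lebesgue C"
proof (rule ennreal_le_epsilon)
  fix e :: real assume e: "0 < e"
  define d where "d = e / (2 * (c * L + 1))"
  have cl: "0 \<le> c * L" using c1 lam by simp
  have d: "0 < d" unfolding d_def using e cl by simp
  define C' where "C' = (C \<union> ball p d) \<inter> {0<..<1}"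
  obtain y where y: "y \<in> C" "dist y p < d" using p(1) d closure_approachable by blast
  have "connected (C \<union> ball p d)"
    using y C(1) by (intro connected_Un) (auto simp: is_interval_connected_1[symmetric] dist_commute is_interval_ball_real)
  then have C'i: "is_interval C'" unfolding C'_def
    by (intro is_interval_Int) (auto simp: is_interval_connected_1)
  have C'O: "C' \<subseteq> {0<..<1}" unfolding C'_def by auto
  have Cs: "C \<in> sets lebesgue" using interval_meas C by blast
  have "ball p d \<inter> {x\<in>{0<..<1}. \<phi> x \<le> L} \<subseteq> C' \<inter> {x\<in>{0<..<1}. \<phi> x \<le> L}"
    unfolding C'_def by auto
  then have "emeasure lebesgue (ball p d \<inter> {x\<in>{0<..<1}. \<phi> x \<le> L}) \<le> emeasure lebesgue (C' \<inter> {x\<in>{0<..<1}. \<phi> x \<le> L})"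
    using interval_meas[OF C'i C'O] sets_le by (intro emeasure_mono) auto
  then have "emeasure lebesgue (C' \<inter> {x\<in>{0<..<1}. \<phi> x \<le> L}) > 0" using p(2)[OF d] by simp
  then have 1: "\<nu> C' \<le> ennreal (c * L) * emeasure lebesgue C'"
    by (rule A1_app[OF C'i C'O lam])
  have "C' \<subseteq> C \<union> ball p d" unfolding C'_def by auto
  then have "emeasure lebesgue C' \<le> emeasure lebesgue (C \<union> ball p d)"
    using Cs by (intro emeasure_mono) auto
  also have "\<dots> \<le> emeasure lebesgue C + emeasure lebesgue (ball p d)"
    using Cs by (intro emeasure_subadditive) auto
  also have "\<dots> = emeasure lebesgue C + ennreal (2 * d)"
    using d by (metis emeasure_ball_real less_imp_le)
  finally have 2: "emeasure lebesgue C' \<le> emeasure lebesgue C + ennreal (2 * d)" .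
  have "C \<subseteq> C'" unfolding C'_def using C by auto
  then have "\<nu> C \<le> \<nu> C'" by (rule nu_mono)
  also have "\<dots> \<le> ennreal (c * L) * (emeasure lebesgue C + ennreal (2 * d))"
    using 1 2 by (meson mult_left_mono order_trans zero_le)
  also have "\<dots> = ennreal (c * L) * emeasure lebesgue C + ennreal (c * L * (2 * d))"
    using cl d by (simp add: distrib_left ennreal_mult)
  also have "\<dots> \<le> ennreal (c * L) * emeasure lebesgue C + ennreal e"
  proof -
    have "c * L * (2 * d) = e * (c * L / (c * L + 1))" unfolding d_def using cl by (simp add: field_simps)
    also have "\<dots> \<le> e * 1" using cl e by (intro mult_left_mono) auto
    finally show ?thesis by (intro add_left_mono ennreal_leI) simp
  qed
  finally show "\<nu> C \<le> ennreal (c * L) * emeasure lebesgue C + ennreal e" .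
qed


lemma open_leb: "open (A::real set) \<Longrightarrow> A \<in> sets lebesgue" by simp

lemma nu_density: assumes "S \<in> sets lebesgue" "S \<subseteq> {0<..<1}"
  shows "emeasure (density lebesgue (\<lambda>x. ennreal (\<psi> x))) S = \<nu> S"
proof -
  have m: "(\<lambda>x. ennreal (\<psi> x)) \<in> borel_measurable lebesgue" using psi_meas by simp
  have "emeasure (density lebesgue (\<lambda>x. ennreal (\<psi> x))) S = set_nn_integral lebesgue S (\<lambda>x. ennreal (\<psi> x))"
    by (rule emeasure_density[OF m assms(1)])
  also have "\<dots> = \<nu> S" unfolding \<nu>_def
    using assms(2) by (intro nn_integral_cong) (auto simp: \<psi>_def indicator_def)
  finally show ?thesis .
qed

lemma KL_pos:
  assumes lam: "0 \<le> L" and Fpos: "emeasure lebesgue {x\<in>{0<..<1}. \<phi> x \<le> L} > 0"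
  shows "\<nu> {x\<in>{0<..<1}. L < \<phi> x} \<le> ennreal (c * L) * emeasure lebesgue {x\<in>{0<..<1}. L < \<phi> x}"
proof -
  define F where "F = {x\<in>{0<..<1::real}. \<phi> x \<le> L}"
  define G where "G = {x\<in>{0<..<1::real}. L < \<phi> x}"
  have Fs: "F \<in> sets lebesgue" unfolding F_def by (rule sets_le)
  have Gs: "G \<in> sets lebesgue" unfolding G_def by (rule sets_gt)
  define U where "U = {x\<in>{0<..<1::real}. \<exists>r>0. emeasure lebesgue (ball x r \<inter> F) = 0}"
  have UO: "U \<subseteq> {0<..<1}" unfolding U_def by auto
  have Uopen: "open U"
    unfolding open_contains_ball
  proof
    fix x assume "x \<in> U"
    then obtain r where x: "0 < x" "x < 1" and r: "r > 0" "emeasure lebesgue (ball x r \<inter> F) = 0"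
      unfolding U_def by auto
    define e where "e = min (r/2) (min x (1-x))"
    have e: "e > 0" unfolding e_def using x r by auto
    have "ball x e \<subseteq> U"
    proof
      fix z assume "z \<in> ball x e"
      then have z: "\<bar>x - z\<bar> < e" by (simp add: dist_real_def)
      then have zO: "0 < z" "z < 1" unfolding e_def by auto
      have er: "e \<le> r/2" unfolding e_def by (rule min.cobounded1)
      have "ball z (r/2) \<subseteq> ball x r"
      proof
        fix w assume "w \<in> ball z (r/2)"
        then have "\<bar>z - w\<bar> < r/2" by (simp add: dist_real_def)
        moreover have "\<bar>x - w\<bar> \<le> \<bar>x - z\<bar> + \<bar>z - w\<bar>" using abs_triangle_ineq[of "x - z" "z - w"] by simp
        ultimately show "w \<in> ball x r" using z er by (simp add: dist_real_def)
      qed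
      then have "emeasure lebesgue (ball z (r/2) \<inter> F) \<le> emeasure lebesgue (ball x r \<inter> F)"
        using Fs by (intro emeasure_mono) auto
      then have "emeasure lebesgue (ball z (r/2) \<inter> F) = 0" using r by simp
      then show "z \<in> U" unfolding U_def using zO r by (intro CollectI conjI exI[of _ "r/2"]) auto
    qed
    then show "\<exists>e>0. ball x e \<subseteq> U" using e by blast
  qed
  have Us: "U \<in> sets lebesgue" using Uopen by (rule open_leb)
  have UF: "emeasure lebesgue (U \<inter> F) = 0"
  proof -
    define B where "B = {ball x r | x r. r > 0 \<and> emeasure lebesgue (ball x r \<inter> F) = 0}"
    have Bo: "\<And>b. b \<in> B \<Longrightarrow> open b" unfolding B_def by auto
    obtain B' where B': "B' \<subseteq> B" "countable B'" "\<Union>B' = \<Union>B"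
      by (rule Lindelof[of B, OF Bo])
    have "U \<subseteq> \<Union>B"
    proof
      fix x assume "x \<in> U"
      then obtain r where r: "r > 0" "emeasure lebesgue (ball x r \<inter> F) = 0" unfolding U_def by auto
      then have "ball x r \<in> B" unfolding B_def by blast
      moreover have "x \<in> ball x r" using r by simp
      ultimately show "x \<in> \<Union>B" by blast
    qed
    then have sub: "U \<inter> F \<subseteq> \<Union> ((\<lambda>b. b \<inter> F) ` B')" using B'(3) by blast
    have "\<Union> ((\<lambda>b. b \<inter> F) ` B') \<in> null_sets lebesgue"
    proof (rule null_sets_UN'[OF B'(2)])
      fix b assume "b \<in> B'"
      then obtain x r where "b = ball x r" "emeasure lebesgue (ball x r \<inter> F) = 0"
        using B'(1) unfolding B_def by auto
      then show "b \<inter> F \<in> null_sets lebesgue" using Fs by (intro null_setsI) auto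
    qed
    then have "emeasure lebesgue (U \<inter> F) \<le> 0"
      using sub by (metis emeasure_mono null_setsD1 null_setsD2)
    then show ?thesis by simp
  qed
  have compbound: "\<nu> C \<le> ennreal (c * L) * emeasure lebesgue C"
    if W: "open W" "W \<subseteq> {0<..<1}" "U \<subseteq> W" and C: "C \<in> components W" for W C
  proof -
    have Co: "open C" using open_components W(1) C by blast
    have Cc: "connected C" using C in_components_connected by blast
    have CW: "C \<subseteq> W" using C in_components_subset by blast
    have Cne: "C \<noteq> {}" using C in_components_nonempty by blast
    have Ci: "is_interval C" using Cc by (simp add: is_interval_connected_1)
    obtain p where p: "p \<in> closure C" "p \<in> {0<..<1}" "p \<notin> U"
    proof (cases "C \<subseteq> U")
      case False
      then obtain x where "x \<in> C" "x \<notin> U" by blast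
      then show ?thesis using that CW W(2) closure_subset by blast
    next
      case True
      have "\<exists>p\<in>closure C \<inter> {0<..<1}. p \<notin> C"
      proof (rule ccontr)
        assume "\<not> (\<exists>p\<in>closure C \<inter> {0<..<1}. p \<notin> C)"
        then have cl: "closure C \<inter> {0<..<1} \<subseteq> C" by blast
        have "openin (top_of_set {0<..<1::real}) C"
          using Co CW W(2) by (auto simp: openin_open_eq)
        moreover have "closedin (top_of_set {0<..<1::real}) C"
          unfolding closedin_closed
          using cl CW W(2) closure_subset[of C] by (intro exI[of _ "closure C"]) auto
        ultimately have "C = {} \<or> C = {0<..<1}"
          using connected_Ioo[of "0::real" 1] unfolding connected_clopen by blast
        then have "C = {0<..<1}" using Cne by blast
        then have "F \<subseteq> U \<inter> F" using True unfolding F_def by auto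
        then have "emeasure lebesgue F \<le> emeasure lebesgue (U \<inter> F)"
          using Us Fs by (intro emeasure_mono) auto
        then show False using UF Fpos unfolding F_def by simp
      qed
      then obtain p where p: "p \<in> closure C" "p \<in> {0<..<1}" "p \<notin> C" by blast
      have "p \<notin> W"
      proof
        assume "p \<in> W"
        have sub1: "C \<subseteq> insert p C" by blast
        have sub2: "insert p C \<subseteq> closure C" using p(1) closure_subset[of C] by blast
        have con: "connected (insert p C)" by (rule connected_intermediate_closure[OF Cc sub1 sub2])
        have max: "\<forall>D. D \<noteq> {} \<and> C \<subseteq> D \<and> D \<subseteq> W \<and> connected D \<longrightarrow> D = C"
          using C unfolding in_components_maximal by blast
        have iW: "insert p C \<subseteq> W" using CW \<open>p \<in> W\<close> by blast
        have imp: "insert p C \<noteq> {} \<and> C \<subseteq> insert p C \<and> insert p C \<subseteq> W \<and> connected (insert p C) \<longrightarrow> insert p C = C"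
          using max by (rule spec)
        have "insert p C = C" by (rule mp[OF imp]) (intro conjI sub1 iW con insert_not_empty)
        then show False using p(3) by blast
      qed
      then show ?thesis using that p W(3) by blast
    qed
    have pos: "emeasure lebesgue (ball p r \<inter> {x\<in>{0<..<1}. \<phi> x \<le> L}) > 0" if "r > 0" for r
    proof -
      have "emeasure lebesgue (ball p r \<inter> F) \<noteq> 0" using p(2,3) that unfolding U_def by auto
      then show ?thesis unfolding F_def by (simp add: zero_less_iff_neq_zero)
    qed
    have CO: "C \<subseteq> {0<..<1}" using CW W(2) by blast
    show ?thesis by (rule extend[OF Ci CO lam p(1) pos])
  qed
  show ?thesis
    unfolding G_def[symmetric]
  proof (rule ennreal_le_epsilon)
    fix e :: real assume e: "e > 0"
    have cl: "0 \<le> c * L" using c1 lam by simp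
    define e' where "e' = e / (c * L + 1)"
    have e': "e' > 0" unfolding e'_def using e cl by simp
    have GKs: "G - U \<in> sets lebesgue" using Gs Us by auto
    obtain T where T: "open T" "G - U \<subseteq> T" "(T - (G - U)) \<in> lmeasurable"
        "emeasure lebesgue (T - (G - U)) < ennreal e'"
      using sets_lebesgue_outer_open[OF GKs e'] by blast
    define W where "W = U \<union> (T \<inter> {0<..<1})"
    have Wo: "open W" unfolding W_def using Uopen T(1) by (intro open_Un open_Int open_greaterThanLessThan)
    have WO: "W \<subseteq> {0<..<1}" unfolding W_def using UO by auto
    have UW: "U \<subseteq> W" unfolding W_def by auto
    have Ws: "W \<in> sets lebesgue" using Wo by (rule open_leb)
    have GW: "G \<subseteq> W" unfolding W_def G_def using T(2) G_def by auto
    have cnt: "countable (components W)"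
      by (rule countable_disjoint_open_subsets)
         (use open_components[OF Wo] pairwise_disjoint_components[of W] in \<open>auto simp: pairwise_def disjnt_def\<close>)
    have Cs: "C \<in> sets lebesgue" if "C \<in> components W" for C
      using open_components[OF Wo that] by (rule open_leb)
    have CO: "C \<subseteq> {0<..<1}" if "C \<in> components W" for C
      using in_components_subset[OF that] WO by blast
    have disj: "disjoint_family_on (\<lambda>C. C) (components W)"
      using pairwise_disjoint_components[of W] unfolding disjoint_family_on_def pairwise_def by blast
    define D where "D = density lebesgue (\<lambda>x. ennreal (\<psi> x))"
    have sD: "sets D = sets lebesgue" unfolding D_def by simp
    have "\<nu> G \<le> \<nu> W" using GW by (rule nu_mono)
    also have "\<nu> W = emeasure D W" unfolding D_def using nu_density[OF Ws WO] by simp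
    also have "\<dots> = emeasure D (\<Union> ((\<lambda>C. C) ` components W))" by simp
    also have "\<dots> = (\<integral>\<^sup>+C. emeasure D C \<partial>count_space (components W))"
      by (rule emeasure_UN_countable) (use Cs sD cnt disj in auto)
    also have "\<dots> \<le> (\<integral>\<^sup>+C. ennreal (c * L) * emeasure lebesgue C \<partial>count_space (components W))"
    proof (rule nn_integral_mono)
      fix C assume "C \<in> space (count_space (components W))"
      then have C: "C \<in> components W" by simp
      have "emeasure D C = \<nu> C" unfolding D_def using nu_density[OF Cs[OF C] CO[OF C]] .
      also have "\<dots> \<le> ennreal (c * L) * emeasure lebesgue C"
        by (rule compbound[OF Wo WO UW C])
      finally show "emeasure D C \<le> ennreal (c * L) * emeasure lebesgue C" .
    qed
    also have "\<dots> = ennreal (c * L) * (\<integral>\<^sup>+C. emeasure lebesgue C \<partial>count_space (components W))"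
      by (rule nn_integral_cmult) simp
    also have "(\<integral>\<^sup>+C. emeasure lebesgue C \<partial>count_space (components W)) = emeasure lebesgue (\<Union> ((\<lambda>C. C) ` components W))"
      by (rule emeasure_UN_countable[symmetric]) (use Cs cnt disj in auto)
    also have "\<dots> = emeasure lebesgue W" by simp
    also have "emeasure lebesgue W \<le> emeasure lebesgue G + ennreal e'"
    proof -
      have Ts: "T \<in> sets lebesgue" using T(1) by (rule open_leb)
      have TGs: "T - (G - U) \<in> sets lebesgue" using T(3) by (rule fmeasurableD)
      have "emeasure lebesgue W \<le> emeasure lebesgue U + emeasure lebesgue (T \<inter> {0<..<1})"
        unfolding W_def using Us Ts by (intro emeasure_subadditive) auto
      also have "emeasure lebesgue U \<le> emeasure lebesgue (U \<inter> G)"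
      proof -
        have "U \<subseteq> (U \<inter> G) \<union> (U \<inter> F)" using UO unfolding G_def F_def by auto
        then have "emeasure lebesgue U \<le> emeasure lebesgue ((U \<inter> G) \<union> (U \<inter> F))"
          using Us Gs Fs by (intro emeasure_mono) auto
        also have "\<dots> \<le> emeasure lebesgue (U \<inter> G) + emeasure lebesgue (U \<inter> F)"
          using Us Gs Fs by (intro emeasure_subadditive) auto
        finally show ?thesis using UF by simp
      qed
      also have "emeasure lebesgue (T \<inter> {0<..<1}) \<le> emeasure lebesgue (G - U) + ennreal e'"
      proof -
        have "T \<inter> {0<..<1} \<subseteq> (G - U) \<union> (T - (G - U))" by auto
        then have "emeasure lebesgue (T \<inter> {0<..<1}) \<le> emeasure lebesgue ((G - U) \<union> (T - (G - U)))"
          using GKs TGs Ts by (intro emeasure_mono) auto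
        also have "\<dots> \<le> emeasure lebesgue (G - U) + emeasure lebesgue (T - (G - U))"
          using GKs TGs by (intro emeasure_subadditive) auto
        also have "\<dots> \<le> emeasure lebesgue (G - U) + ennreal e'"
          using T(4) by (intro add_left_mono) simp
        finally show ?thesis .
      qed
      also have "emeasure lebesgue (U \<inter> G) + (emeasure lebesgue (G - U) + ennreal e')
          = (emeasure lebesgue (U \<inter> G) + emeasure lebesgue (G - U)) + ennreal e'"
        by (simp add: add.assoc)
      also have "emeasure lebesgue (U \<inter> G) + emeasure lebesgue (G - U) = emeasure lebesgue G"
      proof -
        have "emeasure lebesgue (U \<inter> G) + emeasure lebesgue (G - U) = emeasure lebesgue ((U \<inter> G) \<union> (G - U))"
          using Us Gs by (intro plus_emeasure) auto
        also have "(U \<inter> G) \<union> (G - U) = G" by auto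
        finally show ?thesis .
      qed
      finally show ?thesis by (simp add: add_mono)
    qed
    then have "ennreal (c * L) * emeasure lebesgue W \<le> ennreal (c * L) * (emeasure lebesgue G + ennreal e')"
      by (rule mult_left_mono) simp
    also have "\<dots> = ennreal (c * L) * emeasure lebesgue G + ennreal (c * L * e')"
      using cl e' by (simp add: distrib_left ennreal_mult)
    also have "\<dots> \<le> ennreal (c * L) * emeasure lebesgue G + ennreal e"
    proof -
      have "c * L * e' = e * (c * L / (c * L + 1))" unfolding e'_def using cl by (simp add: field_simps)
      also have "\<dots> \<le> e * 1" using cl e by (intro mult_left_mono) auto
      finally show ?thesis by (intro add_left_mono ennreal_leI) simp
    qed
    finally show "\<nu> G \<le> ennreal (c * L) * emeasure lebesgue G + ennreal e" .
  qed
qed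




lemma KL:
  assumes lam: "0 \<le> L" and cond: "emeasure lebesgue {x\<in>{0<..<1}. \<phi> x \<le> L} > 0 \<or> ess_inf_on \<phi> {0<..<1} \<le> ennreal L"
  shows "\<nu> {x\<in>{0<..<1}. L < \<phi> x} \<le> ennreal (c * L) * emeasure lebesgue {x\<in>{0<..<1}. L < \<phi> x}"
proof (cases "emeasure lebesgue {x\<in>{0<..<1}. \<phi> x \<le> L} > 0")
  case True
  then show ?thesis using KL_pos lam by blast
next
  case False
  then have F0: "emeasure lebesgue {x\<in>{0<..<1}. \<phi> x \<le> L} = 0" by simp
  with cond have ess: "ess_inf_on \<phi> {0<..<1} \<le> ennreal L" by simp
  have ii: "is_interval {0<..<1::real} \<and> {0<..<1::real} \<subseteq> {0<..<1} \<and> measure lebesgue {0<..<1::real} > 0"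
    by (simp add: is_interval_oo)
  have "\<nu> {0<..<1} / ennreal (measure lebesgue {0<..<1::real}) \<le> ennreal c * ess_inf_on \<phi> {0<..<1}"
    using A1 ii unfolding A1_cond_def \<nu>_def by blast
  then have "\<nu> {0<..<1} \<le> ennreal c * ess_inf_on \<phi> {0<..<1}" by (simp add: divide_ennreal_def)
  also have "\<dots> \<le> ennreal c * ennreal L" by (intro mult_left_mono ess) simp
  also have "\<dots> = ennreal (c * L)" using c1 lam by (simp add: ennreal_mult)
  finally have 1: "\<nu> {x\<in>{0<..<1}. L < \<phi> x} \<le> ennreal (c * L)"
    using nu_mono[OF sub_gt[of L]] by (rule order_trans[rotated])
  have "1 = emeasure lebesgue {0<..<1::real}" by simp
  also have "\<dots> \<le> emeasure lebesgue ({x\<in>{0<..<1}. L < \<phi> x} \<union> {x\<in>{0<..<1}. \<phi> x \<le> L})"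
    using sets_gt sets_le by (intro emeasure_mono) auto
  also have "\<dots> \<le> emeasure lebesgue {x\<in>{0<..<1}. L < \<phi> x} + emeasure lebesgue {x\<in>{0<..<1}. \<phi> x \<le> L}"
    using sets_gt sets_le by (intro emeasure_subadditive) auto
  finally have "1 \<le> emeasure lebesgue {x\<in>{0<..<1}. L < \<phi> x}" using F0 by simp
  then have "ennreal (c * L) * 1 \<le> ennreal (c * L) * emeasure lebesgue {x\<in>{0<..<1}. L < \<phi> x}"
    by (intro mult_left_mono) auto
  then show ?thesis using 1 by simp
qed

lemma mu_meas: "(\<lambda>y. ennreal (\<mu> y)) \<in> borel_measurable lborel"
proof -
  have "mono (\<lambda>y. - \<mu> y)" by (auto simp: mono_def intro: mu_antimono)
  then have "(\<lambda>y. - \<mu> y) \<in> borel_measurable borel" by (rule borel_measurable_mono)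
  then have "(\<lambda>y. - (- \<mu> y)) \<in> borel_measurable borel" by simp
  then show ?thesis by simp
qed

lemma nuG_layer:
  assumes lam: "0 \<le> L"
  shows "\<nu> {x\<in>{0<..<1}. L < \<phi> x} = ennreal (L * \<mu> L) + (\<integral>\<^sup>+y. indicator {L..} y * ennreal (\<mu> y) \<partial>lborel)"
proof -
  define G where "G = {x\<in>{0<..<1::real}. L < \<phi> x}"
  define g where "g x = indicator G x * \<psi> x" for x
  have Gs: "G \<in> sets lebesgue" unfolding G_def by (rule sets_gt)
  have gm: "g \<in> borel_measurable lebesgue"
    unfolding g_def using Gs psi_meas by (intro borel_measurable_times borel_measurable_indicator) auto
  have gnn: "0 \<le> g x" for x unfolding g_def using psi_nn by (simp add: indicator_def)
  have "\<nu> G = (\<integral>\<^sup>+x. ennreal (g x) \<partial>lebesgue)"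
    unfolding \<nu>_def g_def G_def by (intro nn_integral_cong) (auto simp: \<psi>_def indicator_def)
  also have "\<dots> = (\<integral>\<^sup>+y. emeasure lebesgue {x. 0 \<le> y \<and> y < g x} \<partial>lborel)"
    by (rule layer_cake[OF gm gnn])
  also have "\<dots> = (\<integral>\<^sup>+y. indicator {0..<L} y * ennreal (\<mu> L) + indicator {L..} y * ennreal (\<mu> y) \<partial>lborel)"
  proof (rule nn_integral_cong)
    fix y :: real
    show "emeasure lebesgue {x. 0 \<le> y \<and> y < g x} = indicator {0..<L} y * ennreal (\<mu> L) + indicator {L..} y * ennreal (\<mu> y)"
    proof (cases "0 \<le> y")
      case False then show ?thesis using lam by (simp add: indicator_def)
    next
      case True
      have eqn: "{x. 0 \<le> y \<and> y < g x} = {x\<in>{0<..<1}. max L y < \<phi> x}"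
        using True unfolding g_def G_def \<psi>_def by (auto simp: indicator_def)
      have "emeasure lebesgue {x. 0 \<le> y \<and> y < g x} = ennreal (\<mu> (max L y))"
        unfolding eqn by (rule mu_emeasure)
      then show ?thesis using True by (auto simp: indicator_def max_def)
    qed
  qed
  also have "\<dots> = (\<integral>\<^sup>+y. indicator {0..<L} y * ennreal (\<mu> L) \<partial>lborel) + (\<integral>\<^sup>+y. indicator {L..} y * ennreal (\<mu> y) \<partial>lborel)"
    using mu_meas by (intro nn_integral_add) auto
  also have "(\<integral>\<^sup>+y. indicator {0..<L} y * ennreal (\<mu> L) \<partial>lborel) = ennreal (L * \<mu> L)"
    using lam mu_nn by (simp add: nn_integral_multc ennreal_mult)
  finally show ?thesis unfolding G_def .
qed




lemma ds_meas:
  assumes I: "is_interval I" "I \<subseteq> {0<..<1}"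
  shows "(\<lambda>x. indicator I x * ds x) \<in> borel_measurable lebesgue"
proof (rule borel_measurableI_greater)
  fix y :: real
  show "{x \<in> space lebesgue. y < indicator I x * ds x} \<in> sets lebesgue"
  proof (cases "0 \<le> y")
    case False
    have "{x \<in> space lebesgue. y < indicator I x * ds x} = UNIV"
    proof (intro set_eqI iffI)
      fix x :: real
      show "x \<in> {x \<in> space lebesgue. y < indicator I x * ds x}"
      proof (cases "x \<in> I")
        case True
        then have "0 < x" "x \<le> 1" using I by auto
        then have "0 \<le> ds x" by (rule ds_nn)
        then show ?thesis using True False by simp
      next
        case False2: False
        then show ?thesis using False by simp
      qed
    qed simp
    then show ?thesis by simp
  next
    case True
    define S where "S = {x\<in>I. y < ds x}"
    have eq: "{x \<in> space lebesgue. y < indicator I x * ds x} = S"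
      using True by (auto simp: S_def indicator_def)
    have "is_interval S" unfolding is_interval_1
    proof (intro ballI allI impI)
      fix u v z assume u: "u \<in> S" and v: "v \<in> S" and z: "u \<le> z \<and> z \<le> v"
      have "u \<in> I" "v \<in> I" using u v by (auto simp: S_def)
      then have zI: "z \<in> I" using I(1) z unfolding is_interval_1 by blast
      then have z0: "0 < z" using I by auto
      have "v \<le> 1" using \<open>v \<in> I\<close> I by auto
      then have "ds v \<le> ds z" using ds_mono[OF z0] z by auto
      then show "z \<in> S" using v zI by (auto simp: S_def)
    qed
    moreover have "S \<subseteq> {0<..<1}" using I by (auto simp: S_def)
    ultimately show ?thesis unfolding eq by (rule interval_meas)
  qed
qed

lemma ds_A1_interval:
  assumes I: "is_interval I" "I \<subseteq> {0<..<1}" "measure lebesgue I > 0"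
  shows "set_nn_integral lebesgue I (\<lambda>x. ennreal (ds x)) / ennreal (measure lebesgue I)
           \<le> ennreal c * ess_inf_on ds I"
proof -
  have Is: "I \<in> sets lebesgue" using interval_meas I by blast
  have Ine: "I \<noteq> {}" using I(3) by auto
  define a where "a = Inf I"
  define b where "b = Sup I"
  have bb: "bdd_below I" "bdd_above I" using I(2)
    by (auto intro!: bdd_belowI[of _ 0] bdd_aboveI[of _ 1])
  have Iab: "I \<subseteq> {a..b}" using bb by (auto simp: a_def b_def intro: cInf_lower cSup_upper)
  have a0: "0 \<le> a" unfolding a_def using Ine I(2) by (intro cInf_greatest) auto
  have b1: "b \<le> 1" unfolding b_def using Ine I(2) by (intro cSup_least) auto
  have aleb: "a \<le> b" using Ine Iab by auto
  have oab: "{a<..<b} \<subseteq> I"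
  proof
    fix z assume "z \<in> {a<..<b}"
    then have "Inf I < z" "z < Sup I" by (auto simp: a_def b_def)
    then obtain u v where uv: "u \<in> I" "u < z" "v \<in> I" "z < v"
      using cInf_less_iff[OF Ine bb(1)] less_cSup_iff[OF Ine bb(2)] by blast
    then show "z \<in> I" using I(1) unfolding is_interval_1 by (meson less_imp_le)
  qed
  have emI: "emeasure lebesgue I = ennreal (measure lebesgue I)"
    using emeasure_sub_Omega(1)[OF Is I(2)] .
  have mI: "measure lebesgue I = b - a"
  proof -
    have "emeasure lebesgue I \<le> emeasure lebesgue {a..b}" using Iab Is by (intro emeasure_mono) auto
    moreover have "emeasure lebesgue {a<..<b} \<le> emeasure lebesgue I" using oab Is by (intro emeasure_mono) auto
    ultimately have "ennreal (measure lebesgue I) \<le> ennreal (b - a)" "ennreal (b - a) \<le> ennreal (measure lebesgue I)"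
      using aleb emI by auto
    then show ?thesis using aleb I(3) by (auto simp: ennreal_le_iff2)
  qed
  have ab: "a < b" using mI I(3) by simp
  have b0: "0 < b" using a0 ab by simp
  define L where "L = ds b"
  have L0: "0 \<le> L" using ds_nn b0 b1 by (simp add: L_def)
  have muL: "\<mu> L \<le> b"
  proof (rule ccontr)
    assume "\<not> \<mu> L \<le> b"
    then have "L < ds b" using ds_P3[OF b0 b1] by simp
    then show False by (simp add: L_def)
  qed
  have muy: "\<mu> y \<le> b" if "L \<le> y" for y using mu_antimono[OF that] muL by linarith
  have cond: "emeasure lebesgue {x\<in>{0<..<1}. \<phi> x \<le> L} > 0 \<or> ess_inf_on \<phi> {0<..<1} \<le> ennreal L"
  proof (cases "\<mu> L < 1")
    case True
    have "1 = emeasure lebesgue {0<..<1::real}" by simp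
    also have "\<dots> \<le> emeasure lebesgue ({x\<in>{0<..<1}. L < \<phi> x} \<union> {x\<in>{0<..<1}. \<phi> x \<le> L})"
      using sets_gt sets_le by (intro emeasure_mono) auto
    also have "\<dots> \<le> emeasure lebesgue {x\<in>{0<..<1}. L < \<phi> x} + emeasure lebesgue {x\<in>{0<..<1}. \<phi> x \<le> L}"
      using sets_gt sets_le by (intro emeasure_subadditive) auto
    also have "\<dots> = ennreal (\<mu> L) + emeasure lebesgue {x\<in>{0<..<1}. \<phi> x \<le> L}"
      unfolding mu_emeasure ..
    finally have 1: "1 \<le> ennreal (\<mu> L) + emeasure lebesgue {x\<in>{0<..<1}. \<phi> x \<le> L}" .
    show ?thesis
    proof (rule disjI1, rule ccontr)
      assume "\<not> emeasure lebesgue {x\<in>{0<..<1}. \<phi> x \<le> L} > 0"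
      then have "emeasure lebesgue {x\<in>{0<..<1}. \<phi> x \<le> L} = 0" by simp
      then have "1 \<le> ennreal (\<mu> L)" using 1 by simp
      then have "1 \<le> \<mu> L" by (simp add: ennreal_le_iff2 mu_nn)
      then show False using True by simp
    qed
  next
    case False
    then have "1 \<le> b" using muL by simp
    then have "b = 1" using b1 by simp
    then show ?thesis using essinf_le_ds1 by (simp add: L_def)
  qed
  define X where "X = (\<integral>\<^sup>+y. indicator {L..} y * ennreal (\<mu> y) \<partial>lborel)"
  have "ennreal (L * \<mu> L) + X = \<nu> {x\<in>{0<..<1}. L < \<phi> x}"
    unfolding X_def using nuG_layer[OF L0] by simp
  also have "\<dots> \<le> ennreal (c * L) * emeasure lebesgue {x\<in>{0<..<1}. L < \<phi> x}"
    by (rule KL[OF L0 cond])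
  also have "\<dots> = ennreal (c * L * \<mu> L)"
    unfolding mu_emeasure using c1 L0 mu_nn by (simp add: ennreal_mult)
  finally have KL': "ennreal (L * \<mu> L) + X \<le> ennreal (c * L * \<mu> L)" .
  have "X \<le> ennreal (L * \<mu> L) + X" by simp
  then have "X \<le> ennreal (c * L * \<mu> L)" using KL' by (rule order_trans)
  then have "X < top" using ennreal_less_top[of "c * L * \<mu> L"] by (rule le_less_trans)
  then obtain xX where xX: "X = ennreal xX" "0 \<le> xX" unfolding less_top_ennreal by blast
  have "ennreal (L * \<mu> L + xX) = ennreal (L * \<mu> L) + X"
    using xX L0 mu_nn by (simp add: ennreal_plus)
  then have "ennreal (L * \<mu> L + xX) \<le> ennreal (c * L * \<mu> L)"
    using KL' by simp
  then have "L * \<mu> L + xX \<le> c * L * \<mu> L"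
    using c1 L0 mu_nn by (simp add: ennreal_le_iff)
  then have "xX \<le> (c - 1) * L * \<mu> L" by (simp add: algebra_simps)
  also have "\<dots> \<le> (c - 1) * L * b" using c1 L0 muL by (intro mult_left_mono) auto
  finally have xXb: "xX \<le> (c - 1) * L * b" .
  define f where "f x = indicator I x * ds x" for x
  have fm: "f \<in> borel_measurable lebesgue" unfolding f_def by (rule ds_meas[OF I(1,2)])
  have fnn: "0 \<le> f x" for x
  proof (cases "x \<in> I")
    case True then have "0 < x" "x \<le> 1" using I by auto
    then show ?thesis using True ds_nn by (simp add: f_def)
  qed (simp add: f_def)
  have "set_nn_integral lebesgue I (\<lambda>x. ennreal (ds x)) = (\<integral>\<^sup>+x. ennreal (f x) \<partial>lebesgue)"
    by (intro nn_integral_cong) (auto simp: f_def indicator_def)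
  also have "\<dots> = (\<integral>\<^sup>+y. emeasure lebesgue {x. 0 \<le> y \<and> y < f x} \<partial>lborel)"
    by (rule layer_cake[OF fm fnn])
  also have "\<dots> \<le> (\<integral>\<^sup>+y. indicator {0..<L} y * ennreal (b - a) + ennreal ((b - a) / b) * (indicator {L..} y * ennreal (\<mu> y)) \<partial>lborel)"
  proof (rule nn_integral_mono)
    fix y :: real
    show "emeasure lebesgue {x. 0 \<le> y \<and> y < f x} \<le> indicator {0..<L} y * ennreal (b - a) + ennreal ((b - a) / b) * (indicator {L..} y * ennreal (\<mu> y))"
    proof (cases "0 \<le> y")
      case False
      then show ?thesis by simp
    next
      case y0: True
      have sub: "{x. 0 \<le> y \<and> y < f x} \<subseteq> {x\<in>I. y < ds x}"
        using y0 by (auto simp: f_def indicator_def split: if_splits)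
      show ?thesis
      proof (cases "y < L")
        case True
        have "emeasure lebesgue {x. 0 \<le> y \<and> y < f x} \<le> emeasure lebesgue I"
          using sub Is by (intro emeasure_mono) auto
        also have "\<dots> = ennreal (b - a)" using emI mI by simp
        finally show ?thesis using True y0 by (simp add: indicator_def)
      next
        case False
        then have Ly: "L \<le> y" by simp
        have "{x. 0 \<le> y \<and> y < f x} \<subseteq> {a..\<mu> y}"
        proof
          fix x assume "x \<in> {x. 0 \<le> y \<and> y < f x}"
          then have x: "x \<in> I" "y < ds x" using sub by auto
          then have "0 < x" "x \<le> 1" using I by auto
          then have "x \<le> \<mu> y" using ds_P2 x(2) by blast
          moreover have "a \<le> x" using x(1) Iab by auto
          ultimately show "x \<in> {a..\<mu> y}" by simp
        qed
        then have "emeasure lebesgue {x. 0 \<le> y \<and> y < f x} \<le> emeasure lebesgue {a..\<mu> y}"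
          by (intro emeasure_mono) auto
        also have "\<dots> \<le> ennreal ((b - a) / b * \<mu> y)"
        proof (cases "a \<le> \<mu> y")
          case True
          have "\<mu> y - a \<le> (b - a) / b * \<mu> y"
          proof -
            have "(\<mu> y - a) * b \<le> (b - a) * \<mu> y"
              using muy[OF Ly] a0 by (simp add: algebra_simps mult_left_mono)
            then show ?thesis using b0 by (simp add: field_simps)
          qed
          then show ?thesis using True by (simp add: ennreal_leI)
        next
          case False
          then show ?thesis by simp
        qed
        also have "\<dots> = ennreal ((b - a) / b) * (indicator {L..} y * ennreal (\<mu> y))"
        proof -
          have e1: "ennreal ((b - a) / b * \<mu> y) = ennreal ((b - a) / b) * ennreal (\<mu> y)"
            by (rule ennreal_mult) (use ab b0 mu_nn in auto)
          have e2: "indicator {L..} y * ennreal (\<mu> y) = ennreal (\<mu> y)" using Ly by simp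
          show ?thesis unfolding e1 e2 ..
        qed
        finally have fin: "emeasure lebesgue {x. 0 \<le> y \<and> y < f x} \<le> ennreal ((b - a) / b) * (indicator {L..} y * ennreal (\<mu> y))" .
        have ny: "y \<notin> {0..<L}" using Ly by simp
        have z: "indicator {0..<L} y * ennreal (b - a) = 0" unfolding indicator_simps(2)[OF ny] by (rule mult_zero_left)
        show ?thesis unfolding z add_0_left by (rule fin)
      qed
    qed
  qed
  also have "\<dots> = (\<integral>\<^sup>+y. indicator {0..<L} y * ennreal (b - a) \<partial>lborel)
                 + (\<integral>\<^sup>+y. ennreal ((b - a) / b) * (indicator {L..} y * ennreal (\<mu> y)) \<partial>lborel)"
    using mu_meas by (intro nn_integral_add) auto
  also have "(\<integral>\<^sup>+y. indicator {0..<L} y * ennreal (b - a) \<partial>lborel) = ennreal (L * (b - a))"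
    using L0 ab by (simp add: nn_integral_multc ennreal_mult)
  also have "(\<integral>\<^sup>+y. ennreal ((b - a) / b) * (indicator {L..} y * ennreal (\<mu> y)) \<partial>lborel)
              = ennreal ((b - a) / b) * X"
    unfolding X_def using mu_meas by (intro nn_integral_cmult) auto
  also have "ennreal (L * (b - a)) + ennreal ((b - a) / b) * X = ennreal (L * (b - a) + (b - a) / b * xX)"
  proof -
    have m: "ennreal ((b - a) / b) * X = ennreal ((b - a) / b * xX)"
      unfolding xX(1) by (rule ennreal_mult[symmetric]) (use ab b0 xX in auto)
    show ?thesis unfolding m by (rule ennreal_plus[symmetric]) (use ab b0 xX L0 in auto)
  qed
  also have "\<dots> \<le> ennreal (c * L * (b - a))"
  proof (rule ennreal_leI)
    have "(b - a) / b * xX \<le> (b - a) / b * ((c - 1) * L * b)"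
      using xXb ab b0 by (intro mult_left_mono) auto
    also have "\<dots> = (c - 1) * L * (b - a)" using b0 by (simp add: field_simps)
    finally show "L * (b - a) + (b - a) / b * xX \<le> c * L * (b - a)" by (simp add: algebra_simps)
  qed
  finally have int: "set_nn_integral lebesgue I (\<lambda>x. ennreal (ds x)) \<le> ennreal (c * L * (b - a))" .
  have ess: "ennreal L \<le> ess_inf_on ds I"
    unfolding ess_inf_on_def
  proof (rule Sup_upper, rule CollectI, rule AE_I2, rule impI)
    fix x assume "x \<in> I"
    then have "0 < x" "x \<le> b" using I(2) Iab by auto
    then have "ds b \<le> ds x" using ds_mono b1 by blast
    then show "ennreal L \<le> ennreal (ds x)" by (simp add: L_def ennreal_leI)
  qed
  have "set_nn_integral lebesgue I (\<lambda>x. ennreal (ds x)) / ennreal (measure lebesgue I)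
        \<le> ennreal (c * L * (b - a)) / ennreal (b - a)"
    unfolding mI by (rule divide_right_mono_ennreal[OF int])
  also have "\<dots> = ennreal (c * L)"
    using ab c1 L0 by (simp add: divide_ennreal)
  also have "\<dots> = ennreal c * ennreal L" using c1 L0 by (simp add: ennreal_mult)
  also have "\<dots> \<le> ennreal c * ess_inf_on ds I" by (intro mult_left_mono ess) simp
  finally show ?thesis .
qed


end

theorem theorem1:
  fixes c :: real and \<phi> :: "real \<Rightarrow> real"
  assumes "c \<ge> 1"
    and "set_borel_measurable lebesgue {0<..<1} \<phi>"
    and "\<forall>x\<in>{0<..<1}. \<phi> x > 0"
    and "A1_cond c \<phi>"
  shows "A1_cond c (decr_rearr \<phi>)"
proof -
  interpret A1s c \<phi> using assms by unfold_locales
  show ?thesis unfolding A1_cond_def using ds_A1_interval by blast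
qed

end
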